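(* Let $M$ be a $\Sigma$-automaton and $0<\xi<1$ such that $(\Sigma^\infty,\rho_{M,\xi})$ is a pseudo-quasimetric space. Then the induced pseudo-metric space $(\mathcal A_M,\tilde\rho_{M,\xi})$ is complete: every sequence $(a_k)$ in $\mathcal A_M$ with $\tilde\rho_{M,\xi}(a_m,a_n)\to0$ as $m,n\to\infty$ has a limit $a\in\mathcal A_M$ with $\tilde\rho_{M,\xi}(a_k,a)\to0$.
   Context: $\Sigma=\{1,\dots,N\}$. A $\Sigma$-automaton $M$ has finite state set $Q=Q_0\cup\{Id,Exit\}$, input alphabet $\Sigma^2$, initial state $Id$, final state $Exit$, transition $\delta:Q\times\Sigma^2\to Q$ with $\delta(Id,(i,j))=Id$ iff $i=j$. Itinerary of $(\mathbf x,\mathbf y)$: $S_0=Id$, $S_k=\delta(S_{k-1},(x_k,y_k))$, stopped at $Exit$; $T_M(\mathbf x,\mathbf y)$ = largest $k$ with $S_k\ne Exit$ (possibly $\infty$); $\rho_{M,\xi}(\mathbf x,\mathbf y)=\xi^{T_M(\mathbf x,\mathbf y)}$ ($\xi^\infty=0$). A pseudo-quasimetric space $(\mathcal A,\rho)$: $\rho\ge0$, $\rho(x,x)=0$, symmetric, $\rho(x,z)\le C(\rho(x,y)+\rho(y,z))$ for a fixed $C\ge1$. $\mathcal A_M=\Sigma^\infty/\sim$ where $\mathbf x\sim\mathbf y$ iff $\rho_{M,\xi}(\mathbf x,\mathbf y)=0$, and $\tilde\rho_{M,\xi}([\mathbf x],[\mathbf y])=\inf\{\rho_{M,\xi}(\mathbf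 a,\mathbf b):\mathbf a\in[\mathbf x],\mathbf b\in[\mathbf y]\}$. *)

theory Defs
  imports "HOL-Analysis.Analysis" "HOL-Library.Extended_Nat"
begin

(* Alphabet Sigma = {1..N}; infinite words are functions nat => nat,
   where x k encodes the letter x_{k+1}. *)
definition SigmaInf :: "nat \<Rightarrow> (nat \<Rightarrow> nat) set" where
  "SigmaInf N = {x. \<forall>k. x k \<in> {1..N}}"

(* A Sigma-automaton with state set Q (= Q_0 \<union> {Id, Exit}),
   transition function delta, initial state qId, final state qExit. *)
definition sigma_automaton ::
  "nat \<Rightarrow> 'q set \<Rightarrow> ('q \<Rightarrow> nat \<times> nat \<Rightarrow> 'q) \<Rightarrow> 'q \<Rightarrow> 'q \<Rightarrow> bool" where
  "sigma_automaton N Q \<delta> qId qExit \<longleftrightarrow>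
     finite Q \<and> qId \<in> Q \<and> qExit \<in> Q \<and> qId \<noteq> qExit \<and>
     (\<forall>q\<in>Q. \<forall>i\<in>{1..N}. \<forall>j\<in>{1..N}. \<delta> q (i, j) \<in> Q) \<and>
     (\<forall>i\<in>{1..N}. \<forall>j\<in>{1..N}. (\<delta> qId (i, j) = qId \<longleftrightarrow> i = j))"

fun itinerary ::
  "('q \<Rightarrow> nat \<times> nat \<Rightarrow> 'q) \<Rightarrow> 'q \<Rightarrow> 'q \<Rightarrow> (nat \<Rightarrow> nat) \<Rightarrow> (nat \<Rightarrow> nat) \<Rightarrow> nat \<Rightarrow> 'q" where
  "itinerary \<delta> qId qExit x y 0 = qId"
| "itinerary \<delta> qId qExit x y (Suc k) =
     (let s = itinerary \<delta> qId qExit x y k in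
      if s = qExit then qExit else \<delta> s (x k, y k))"

definition T_M ::
  "('q \<Rightarrow> nat \<times> nat \<Rightarrow> 'q) \<Rightarrow> 'q \<Rightarrow> 'q \<Rightarrow> (nat \<Rightarrow> nat) \<Rightarrow> (nat \<Rightarrow> nat) \<Rightarrow> enat" where
  "T_M \<delta> qId qExit x y =
     (if finite {k. itinerary \<delta> qId qExit x y k \<noteq> qExit}
      then enat (Max {k. itinerary \<delta> qId qExit x y k \<noteq> qExit})
      else \<infinity>)"

definition rho_M ::
  "('q \<Rightarrow> nat \<times> nat \<Rightarrow> 'q) \<Rightarrow> 'q \<Rightarrow> 'q \<Rightarrow> real \<Rightarrow> (nat \<Rightarrow> nat) \<Rightarrow> (nat \<Rightarrow> nat) \<Rightarrow> real" where
  "rho_M \<delta> qId qExit \<xi> x y =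
     (case T_M \<delta> qId qExit x y of enat n \<Rightarrow> \<xi> ^ n | \<infinity> \<Rightarrow> 0)"

definition pseudo_quasimetric :: "'a set \<Rightarrow> ('a \<Rightarrow> 'a \<Rightarrow> real) \<Rightarrow> bool" where
  "pseudo_quasimetric A \<rho> \<longleftrightarrow>
     (\<forall>x\<in>A. \<forall>y\<in>A. \<rho> x y \<ge> 0 \<and> \<rho> y x = \<rho> x y) \<and>
     (\<forall>x\<in>A. \<rho> x x = 0) \<and>
     (\<exists>C\<ge>1. \<forall>x\<in>A. \<forall>y\<in>A. \<forall>z\<in>A. \<rho> x z \<le> C * (\<rho> x y + \<rho> y z))"

definition zero_rel :: "'a set \<Rightarrow> ('a \<Rightarrow> 'a \<Rightarrow> real) \<Rightarrow> ('a \<times> 'a) set" where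
  "zero_rel A \<rho> = {(x, y). x \<in> A \<and> y \<in> A \<and> \<rho> x y = 0}"

definition quot_space :: "'a set \<Rightarrow> ('a \<Rightarrow> 'a \<Rightarrow> real) \<Rightarrow> 'a set set" where
  "quot_space A \<rho> = A // zero_rel A \<rho>"

definition quot_dist :: "('a \<Rightarrow> 'a \<Rightarrow> real) \<Rightarrow> 'a set \<Rightarrow> 'a set \<Rightarrow> real" where
  "quot_dist \<rho> X Y = Inf {\<rho> a b | a b. a \<in> X \<and> b \<in> Y}"

end

theory Submission
  imports Defs
begin

lemma seqsub:
  fixes x :: "nat \<Rightarrow> nat \<Rightarrow> nat"
  assumes "\<And>k i. x k i \<in> {1..N}"
  shows "\<exists>z r. strict_mono r \<and> (\<forall>i. z i \<in> {1..N}) \<and> (\<forall>i. eventually (\<lambda>j. x (r j) i = z i) sequentially)"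
proof -
  have "compactin (product_topology (\<lambda>_. euclidean) UNIV) (PiE UNIV (\<lambda>_::nat. {1..N::nat}))"
    by (simp add: compactin_PiE finite_imp_compact)
  hence c: "compact (PiE UNIV (\<lambda>_::nat. {1..N::nat}))"
    by (simp only: euclidean_product_topology compactin_euclidean_iff)
  have xin: "\<And>k. x k \<in> PiE UNIV (\<lambda>_::nat. {1..N::nat})" using assms by auto
  have "\<exists>l\<in>PiE UNIV (\<lambda>_::nat. {1..N::nat}). \<exists>r. strict_mono r \<and> (x \<circ> r) \<longlonglongrightarrow> l"
    using compact_imp_seq_compact[OF c] xin unfolding seq_compact_def by blast
  then obtain z r where z: "z \<in> PiE UNIV (\<lambda>_::nat. {1..N::nat})" "strict_mono r" "(x \<circ> r) \<longlonglongrightarrow> z"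
    by blast
  have "eventually (\<lambda>j. x (r j) i = z i) sequentially" for i
  proof -
    have "((\<lambda>j. (x \<circ> r) j i) \<longlongrightarrow> z i) sequentially"
      by (rule continuous_on_tendsto_compose[OF continuous_on_product_coordinates z(3)]) auto
    from topological_tendstoD[OF this, of "{z i}"] show ?thesis by (simp add: open_discrete)
  qed
  moreover have "\<forall>i. z i \<in> {1..N}" using z(1) by (auto simp: PiE_iff)
  ultimately show ?thesis using z(2) by blast
qed
lemma it_exit_mono:
  "itinerary \<delta> qId qExit x y n = qExit \<Longrightarrow> n \<le> m \<Longrightarrow> itinerary \<delta> qId qExit x y m = qExit"
proof (induction m)
  case 0 then show ?case by simp
next
  case (Suc m) then show ?case by (cases "n = Suc m") (auto simp: Let_def)
qed

lemma it_local:
  "(\<And>i. i < n \<Longrightarrow> x i = x' i \<and> y i = y' i) \<Longrightarrow>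
   itinerary \<delta> qId qExit x y n = itinerary \<delta> qId qExit x' y' n"
  by (induction n) (auto simp: Let_def)

lemma rho_nonneg: "0 < \<xi> \<Longrightarrow> 0 \<le> rho_M \<delta> qId qExit \<xi> x y"
  by (auto simp: rho_M_def split: enat.split)

lemma rho_le:
  assumes "0 < \<xi>" "\<xi> < 1" "itinerary \<delta> qId qExit x y n \<noteq> qExit"
  shows "rho_M \<delta> qId qExit \<xi> x y \<le> \<xi> ^ n"
proof (cases "finite {k. itinerary \<delta> qId qExit x y k \<noteq> qExit}")
  case True
  then have "n \<le> Max {k. itinerary \<delta> qId qExit x y k \<noteq> qExit}" using assms(3) by auto
  then show ?thesis using True assms by (simp add: rho_M_def T_M_def power_decreasing)
next
  case False
  then show ?thesis using assms by (simp add: rho_M_def T_M_def)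
qed

lemma rho_ge:
  assumes "0 < \<xi>" "\<xi> < 1" "itinerary \<delta> qId qExit x y n = qExit" "qId \<noteq> qExit"
  shows "\<xi> ^ n \<le> rho_M \<delta> qId qExit \<xi> x y"
proof -
  let ?A = "{k. itinerary \<delta> qId qExit x y k \<noteq> qExit}"
  have sub: "?A \<subseteq> {..<n}"
  proof
    fix k assume "k \<in> ?A"
    then show "k \<in> {..<n}" using it_exit_mono[OF assms(3), of k] by (cases "n \<le> k") auto
  qed
  then have fin: "finite ?A" using finite_subset by blast
  have "0 \<in> ?A" using assms(4) by simp
  then have ne: "?A \<noteq> {}" by blast
  have "Max ?A < n" using fin ne sub by (metis Max_less_iff lessThan_iff subsetD)
  then have "Max ?A \<le> n" by simp
  then show ?thesis using fin assms by (simp add: rho_M_def T_M_def power_decreasing)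
qed


theorem lemma2p3:
  fixes N :: nat and Q :: "'q set" and \<delta> :: "'q \<Rightarrow> nat \<times> nat \<Rightarrow> 'q"
    and qId qExit :: 'q and \<xi> :: real
  assumes "sigma_automaton N Q \<delta> qId qExit"
    and "0 < \<xi>" and "\<xi> < 1"
    and "pseudo_quasimetric (SigmaInf N) (rho_M \<delta> qId qExit \<xi>)"
  shows "\<forall>a :: nat \<Rightarrow> (nat \<Rightarrow> nat) set.
     (\<forall>k. a k \<in> quot_space (SigmaInf N) (rho_M \<delta> qId qExit \<xi>)) \<longrightarrow>
     (\<forall>\<epsilon>>0. \<exists>K. \<forall>m\<ge>K. \<forall>n\<ge>K. quot_dist (rho_M \<delta> qId qExit \<xi>) (a m) (a n) < \<epsilon>) \<longrightarrow>
     (\<exists>b \<in> quot_space (SigmaInf N) (rho_M \<delta> qId qExit \<xi>).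
        (\<lambda>k. quot_dist (rho_M \<delta> qId qExit \<xi>) (a k) b) \<longlonglongrightarrow> 0)"
proof (intro allI impI)
  let ?r = "rho_M \<delta> qId qExit \<xi>"
  let ?S = "SigmaInf N"
  let ?R = "zero_rel ?S ?r"
  let ?It = "itinerary \<delta> qId qExit"
  fix a :: "nat \<Rightarrow> (nat \<Rightarrow> nat) set"
  assume aQ: "\<forall>k. a k \<in> quot_space ?S ?r"
  assume cau: "\<forall>\<epsilon>>0. \<exists>K. \<forall>m\<ge>K. \<forall>n\<ge>K. quot_dist ?r (a m) (a n) < \<epsilon>"
  have idex: "qId \<noteq> qExit" using assms(1) by (simp add: sigma_automaton_def)
  have nn: "\<And>x y. 0 \<le> ?r x y" by (rule rho_nonneg[OF assms(2)])
  have sym: "\<And>x y. x \<in> ?S \<Longrightarrow> y \<in> ?S \<Longrightarrow> ?r y x = ?r x y"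
    using assms(4) by (simp add: pseudo_quasimetric_def)
  have refl0: "\<And>x. x \<in> ?S \<Longrightarrow> ?r x x = 0"
    using assms(4) by (simp add: pseudo_quasimetric_def)
  obtain C where C1: "C \<ge> 1" and tri: "\<And>x y z. x \<in> ?S \<Longrightarrow> y \<in> ?S \<Longrightarrow> z \<in> ?S \<Longrightarrow> ?r x z \<le> C * (?r x y + ?r y z)"
    using assms(4) unfolding pseudo_quasimetric_def by blast
  have cls: "\<exists>x0\<in>?S. a k = ?R `` {x0}" for k
    using aQ unfolding quot_space_def quotient_def by blast
  have ne: "a k \<noteq> {}" and sub: "a k \<subseteq> ?S" for k
  proof -
    obtain x0 where "x0 \<in> ?S" "a k = ?R `` {x0}" using cls by blast
    then show "a k \<noteq> {}" "a k \<subseteq> ?S" using refl0 by (auto simp: zero_rel_def)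
  qed
  have same: "p \<in> a k \<Longrightarrow> q \<in> a k \<Longrightarrow> ?r p q = 0" for p q k
  proof -
    assume p: "p \<in> a k" and q: "q \<in> a k"
    obtain x0 where x0: "x0 \<in> ?S" "a k = ?R `` {x0}" using cls by blast
    have "?r x0 p = 0" "?r x0 q = 0" "p \<in> ?S" "q \<in> ?S" using p q x0 by (auto simp: zero_rel_def)
    then have "?r p q \<le> C * (?r p x0 + ?r x0 q)" using tri[of p x0 q] x0(1) by simp
    also have "\<dots> = 0" using sym \<open>?r x0 p = 0\<close> \<open>?r x0 q = 0\<close> \<open>p \<in> ?S\<close> x0 by simp
    finally show ?thesis using nn[of p q] by linarith
  qed
  define x where "x k = (SOME p. p \<in> a k)" for k
  have xa: "x k \<in> a k" for k using ne[of k] unfolding x_def by (simp add: some_in_eq)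
  have xS: "x k \<in> ?S" for k using xa sub by blast
  have bdd: "bdd_below {?r p q | p q. p \<in> A \<and> q \<in> B}" for A B
    by (rule bdd_belowI[of _ 0]) (use nn in blast)
  have qd_le: "quot_dist ?r A B \<le> ?r p q" if "p \<in> A" "q \<in> B" for A B p q
  proof -
    have "?r p q \<in> {?r p q | p q. p \<in> A \<and> q \<in> B}" using that by blast
    then show ?thesis unfolding quot_dist_def by (rule cInf_lower[OF _ bdd])
  qed
  have qd_ge: "0 \<le> quot_dist ?r A B" if "A \<noteq> {}" "B \<noteq> {}" for A B
  proof -
    have "{?r p q | p q. p \<in> A \<and> q \<in> B} \<noteq> {}" using that by blast
    then show ?thesis unfolding quot_dist_def by (rule cInf_greatest) (use nn in blast)
  qed
  have xcau: "\<exists>K. \<forall>m\<ge>K. \<forall>n\<ge>K. ?r (x m) (x n) < \<epsilon>" if "\<epsilon> > 0" for \<epsilon>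
  proof -
    have "\<epsilon> / (C*C) > 0" using that C1 by simp
    then obtain K where K: "\<forall>m\<ge>K. \<forall>n\<ge>K. quot_dist ?r (a m) (a n) < \<epsilon> / (C*C)"
      using cau by blast
    have "?r (x m) (x n) < \<epsilon>" if "m \<ge> K" "n \<ge> K" for m n
    proof -
      have lt: "Inf {?r p q | p q. p \<in> a m \<and> q \<in> a n} < \<epsilon> / (C*C)"
        using K that unfolding quot_dist_def by blast
      obtain p0 q0 where "p0 \<in> a m" "q0 \<in> a n" using ne[of m] ne[of n] by (meson ex_in_conv)
      then have "{?r p q | p q. p \<in> a m \<and> q \<in> a n} \<noteq> {}" by blast
      from cInf_lessD[OF this lt] obtain p q where pq: "p \<in> a m" "q \<in> a n" "?r p q < \<epsilon> / (C*C)"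
        by blast
      have pS: "p \<in> ?S" "q \<in> ?S" using pq(1,2) sub by blast+
      have r1: "?r (x m) p = 0" using same[OF xa pq(1)] .
      have r2: "?r q (x n) = 0" using same[OF pq(2) xa] .
      have A: "?r (x m) (x n) \<le> C * ?r p (x n)" using tri[OF xS[of m] pS(1) xS[of n]] r1 by simp
      have B: "?r p (x n) \<le> C * ?r p q" using tri[OF pS xS[of n]] r2 by simp
      have B2: "C * ?r p (x n) \<le> C * (C * ?r p q)" using B C1 by simp
      have D: "C * ?r p q < C * (\<epsilon> / (C*C))" by (rule mult_strict_left_mono[OF pq(3)]) (use C1 in simp)
      have D2: "C * (C * ?r p q) < C * (C * (\<epsilon> / (C*C)))" by (rule mult_strict_left_mono[OF D]) (use C1 in simp)
      have E: "C * (C * (\<epsilon> / (C*C))) = \<epsilon>" using C1 by simp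
      show ?thesis using A B2 D2 E by linarith
    qed
    then show ?thesis by blast
  qed
  have ex: "\<forall>n. \<exists>K. \<forall>m\<ge>K. \<forall>k\<ge>K. ?It (x m) (x k) n \<noteq> qExit"
  proof
    fix n
    have "\<xi>^n > 0" using assms(2) by simp
    then obtain K where K: "\<forall>m\<ge>K. \<forall>k\<ge>K. ?r (x m) (x k) < \<xi>^n" using xcau by blast
    have "?It (x m) (x k) n \<noteq> qExit" if "m \<ge> K" "k \<ge> K" for m k
    proof
      assume eq: "?It (x m) (x k) n = qExit"
      have "\<xi>^n \<le> ?r (x m) (x k)" by (rule rho_ge[OF assms(2,3) eq idex])
      moreover have "?r (x m) (x k) < \<xi>^n" using K that by blast
      ultimately show False by simp
    qed
    then show "\<exists>K. \<forall>m\<ge>K. \<forall>k\<ge>K. ?It (x m) (x k) n \<noteq> qExit" by blast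
  qed
  from choice[OF ex] obtain K where K: "\<forall>n. \<forall>m\<ge>K n. \<forall>k\<ge>K n. ?It (x m) (x k) n \<noteq> qExit"
    by blast
  have "\<And>k i. x k i \<in> {1..N}" using xS by (simp add: SigmaInf_def)
  from seqsub[of x N, OF this] obtain z r where z: "strict_mono r" "\<forall>i. z i \<in> {1..N}"
    "\<forall>i. eventually (\<lambda>j. x (r j) i = z i) sequentially" by blast
  have zS: "z \<in> ?S" using z(2) by (simp add: SigmaInf_def)
  have close: "?r (x m) z \<le> \<xi>^n" if "m \<ge> K n" for m n
  proof -
    have "eventually (\<lambda>j. \<forall>i\<in>{..<n}. x (r j) i = z i) sequentially"
      by (rule eventually_ball_finite) (use z(3) in auto)
    then obtain J where J: "\<forall>j\<ge>J. \<forall>i\<in>{..<n}. x (r j) i = z i" unfolding eventually_sequentially by blast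
    define j where "j = max J (K n)"
    have j1: "\<forall>i<n. x (r j) i = z i" using J unfolding j_def by simp
    have "j \<le> r j" using seq_suble[OF z(1)] by simp
    then have j2: "r j \<ge> K n" unfolding j_def by simp
    have "?It (x m) z n = ?It (x m) (x (r j)) n" by (rule it_local) (use j1 in auto)
    moreover have "?It (x m) (x (r j)) n \<noteq> qExit" using K that j2 by blast
    ultimately have "?It (x m) z n \<noteq> qExit" by simp
    then show ?thesis by (rule rho_le[OF assms(2,3)])
  qed
  define b where "b = ?R `` {z}"
  have bQ: "b \<in> quot_space ?S ?r" unfolding b_def quot_space_def using zS by (simp add: quotientI)
  have zb: "z \<in> b" unfolding b_def zero_rel_def using zS refl0 by simp
  show "\<exists>b\<in>quot_space ?S ?r. (\<lambda>k. quot_dist ?r (a k) b) \<longlonglongrightarrow> 0"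
  proof (intro bexI[OF _ bQ] LIMSEQ_I)
    fix e :: real assume e: "e > 0"
    obtain n where n: "\<xi>^n < e" using real_arch_pow_inv[OF e assms(3)] by blast
    have "norm (quot_dist ?r (a m) b - 0) < e" if "m \<ge> K n" for m
    proof -
      have "quot_dist ?r (a m) b \<le> ?r (x m) z" using qd_le xa zb by blast
      moreover have "0 \<le> quot_dist ?r (a m) b" using qd_ge ne zb by blast
      ultimately show ?thesis using close[OF that] n by simp
    qed
    then show "\<exists>no. \<forall>m\<ge>no. norm (quot_dist ?r (a m) b - 0) < e" by blast
  qed
qed

end
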